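(* Let $p,q,n,d$ be positive integers with $p\le n$ and $q\ge n+d-p$. Let $A\in\mathbb{R}^{q\times n}$, $B\in\mathbb{R}^{q\times d}$, $C\in\mathbb{R}^{p\times n}$ of full row rank and $D\in\mathbb{R}^{p\times d}$. Set $\widetilde A=[A\ \ B]$, $\widetilde C=[C\ \ D]$. Let $\widetilde Q=[\widetilde Q_1\ \ \widetilde Q_2]$ be an orthogonal matrix of order $n+d$ with $\widetilde Q_1\in\mathbb{R}^{(n+d)\times p}$ and $\mathcal{R}(\widetilde Q_1)=\mathcal{R}(\widetilde C^T)$ (e.g. obtained from a QR factorization $\widetilde C^T=\widetilde Q\begin{bmatrix}\widetilde R_1\\ 0\end{bmatrix}$), so that the columns of $\widetilde Q_2\in\mathbb{R}^{(n+d)\times(n+d-p)}$ are an orthonormal basis of the null space of $\widetilde C$. Let $\widetilde A\widetilde Q_2=\widetilde U\widetilde\Sigma\widetilde V^T$ be a thin SVD, with $\widetilde U\in\mathbb{R}^{q\times(n+d-p)}$ having orthonormal columns, $\widetilde V$ orthogonal of order $n+d-p$, and $\widetilde\Sigma=\mathrm{diag}(\widetilde\sigma_1,\dots,\widetilde\sigma_{n+d-p})$, $\widetilde\sigma_1\ge\cdots\ge\widetilde\sigma_{n+d-p}\ge 0$. Let $k=n-p$, and write $\widetilde U=[\widetilde U_1\ \ \widetilde U_2]$, $\widetilde V=[\widetilde V_1\ \ \widetilde V_2]$ where $\widetilde U_1,\widetilde V_1$ consist of the first $k$ columns, and $\widetilde\Sigma_1=\mathrm{diag}(\widetilde\sigma_1,\dots,\widetilde\sigma_k)$.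 Put $\overline V_1=\widetilde Q_2\widetilde V_1=\begin{bmatrix}\overline V_{11}\\ \overline V_{21}\end{bmatrix}$ and $\overline V_2=\widetilde Q_2\widetilde V_2=\begin{bmatrix}\overline V_{12}\\ \overline V_{22}\end{bmatrix}$ with $\overline V_{11}\in\mathbb{R}^{n\times k}$, $\overline V_{21}\in\mathbb{R}^{d\times k}$, $\overline V_{12}\in\mathbb{R}^{n\times d}$, $\overline V_{22}\in\mathbb{R}^{d\times d}$. Assume $\widetilde\sigma_{n-p}>\widetilde\sigma_{n-p+1}$ (void if $n=p$) and that $\overline V_{22}$ is nonsingular. Then the TLSE problem has a unique TLSE solution, namely $X_n=-\overline V_{12}\overline V_{22}^{-1}$, and $X_n$ is also the solution of the consistent linear system $\widehat AX=\widehat B$, $CX=D$, where $\widehat A=\widetilde U_1\widetilde\Sigma_1\overline V_{11}^T$ and $\widehat B=\widetilde U_1\widetilde\Sigma_1\overline V_{21}^T$.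
   Context: The multidimensional total least squares problem with linear equality constraint (TLSE) is: minimize $\|[E\ \ F]\|_F$ over $E\in\mathbb{R}^{q\times n}$, $F\in\mathbb{R}^{q\times d}$ subject to the existence of $X\in\mathbb{R}^{n\times d}$ with $(A+E)X=B+F$ and $CX=D$. A TLSE solution is a matrix $X\in\mathbb{R}^{n\times d}$ with $CX=D$ and $(A+E)X=B+F$ for some minimizing pair $(E,F)$. $\mathcal R(\cdot)$ denotes column space. *)

theory Defs
  imports "Jordan_Normal_Form.Matrix" "Jordan_Normal_Form.DL_Rank"
    "Jordan_Normal_Form.Gauss_Jordan_Elimination"
begin

definition hcat :: "'a :: zero mat \<Rightarrow> 'a mat \<Rightarrow> 'a mat" where
  "hcat M N = four_block_mat M N (0\<^sub>m 0 (dim_col M)) (0\<^sub>m 0 (dim_col N))"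

text \<open>Vertical concatenation is the library's append_rows (infix @r).\<close>

definition fro_norm :: "real mat \<Rightarrow> real" where
  "fro_norm M = sqrt (\<Sum>i<dim_row M. \<Sum>j<dim_col M. (M $$ (i,j))\<^sup>2)"

definition orthogonal_of_order :: "nat \<Rightarrow> real mat \<Rightarrow> bool" where
  "orthogonal_of_order m Q \<longleftrightarrow> Q \<in> carrier_mat m m \<and> transpose_mat Q * Q = 1\<^sub>m m"

definition orthonormal_cols :: "real mat \<Rightarrow> bool" where
  "orthonormal_cols U \<longleftrightarrow> transpose_mat U * U = 1\<^sub>m (dim_col U)"

definition colspace :: "real mat \<Rightarrow> real vec set" where
  "colspace M = {M *\<^sub>v x | x. x \<in> carrier_vec (dim_col M)}"

definition full_row_rank :: "real mat \<Rightarrow> bool" where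
  "full_row_rank M \<longleftrightarrow> vec_space.rank (dim_row M) M = dim_row M"

definition tlse_feasible ::
  "real mat \<Rightarrow> real mat \<Rightarrow> real mat \<Rightarrow> real mat \<Rightarrow> real mat \<Rightarrow> real mat \<Rightarrow> real mat \<Rightarrow> bool" where
  "tlse_feasible A B C D E F X \<longleftrightarrow>
     E \<in> carrier_mat (dim_row A) (dim_col A) \<and> F \<in> carrier_mat (dim_row B) (dim_col B) \<and>
     X \<in> carrier_mat (dim_col A) (dim_col B) \<and>
     (A + E) * X = B + F \<and> C * X = D"

definition tlse_minimizer ::
  "real mat \<Rightarrow> real mat \<Rightarrow> real mat \<Rightarrow> real mat \<Rightarrow> real mat \<Rightarrow> real mat \<Rightarrow> bool" where
  "tlse_minimizer A B C D E F \<longleftrightarrow>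
     (\<exists>X. tlse_feasible A B C D E F X) \<and>
     (\<forall>E' F' X'. tlse_feasible A B C D E' F' X' \<longrightarrow> fro_norm (hcat E F) \<le> fro_norm (hcat E' F'))"

definition tlse_solution ::
  "real mat \<Rightarrow> real mat \<Rightarrow> real mat \<Rightarrow> real mat \<Rightarrow> real mat \<Rightarrow> bool" where
  "tlse_solution A B C D X \<longleftrightarrow>
     (\<exists>E F. tlse_minimizer A B C D E F \<and> tlse_feasible A B C D E F X)"

end

theory Submission
  imports Defs
begin


lemma hcat_carrier[simp,intro]: "P \<in> carrier_mat a b1 \<Longrightarrow> R \<in> carrier_mat a b2 \<Longrightarrow> hcat P R \<in> carrier_mat a (b1+b2)"
  unfolding hcat_def carrier_mat_def by auto

lemma hcat_dims[simp]: "dim_row (hcat P R) = dim_row P" "dim_col (hcat P R) = dim_col P + dim_col R"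
  unfolding hcat_def by auto

lemma hcat_index: "P \<in> carrier_mat a b1 \<Longrightarrow> R \<in> carrier_mat a b2 \<Longrightarrow> i < a \<Longrightarrow> j < b1 + b2 \<Longrightarrow>
  hcat P R $$ (i,j) = (if j < b1 then P $$ (i,j) else R $$ (i, j - b1))"
  unfolding hcat_def by auto

lemma app_dims[simp]: "dim_row (X @\<^sub>r Y) = dim_row X + dim_row Y" "dim_col (X @\<^sub>r Y) = dim_col X"
  unfolding append_rows_def by auto

lemma app_index: "X \<in> carrier_mat c1 e \<Longrightarrow> Y \<in> carrier_mat c2 e \<Longrightarrow> i < c1 + c2 \<Longrightarrow> j < e \<Longrightarrow>
  (X @\<^sub>r Y) $$ (i,j) = (if i < c1 then X $$ (i,j) else Y $$ (i - c1, j))"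
  unfolding append_rows_def by auto

lemma transpose_hcat: "P \<in> carrier_mat a b1 \<Longrightarrow> R \<in> carrier_mat a b2 \<Longrightarrow>
  transpose_mat (hcat P R) = transpose_mat P @\<^sub>r transpose_mat R"
  by (rule eq_matI, auto simp: hcat_index app_index)

lemma transpose_app: "X \<in> carrier_mat c1 e \<Longrightarrow> Y \<in> carrier_mat c2 e \<Longrightarrow>
  transpose_mat (X @\<^sub>r Y) = hcat (transpose_mat X) (transpose_mat Y)"
  by (rule eq_matI, auto simp: hcat_index app_index)

lemma hcat_mult_app:
  assumes P: "P \<in> carrier_mat a b1" and R: "R \<in> carrier_mat a b2"
    and X: "X \<in> carrier_mat b1 c" and Y: "Y \<in> carrier_mat b2 c"
  shows "hcat P R * (X @\<^sub>r Y) = P * X + R * Y"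
proof -
  have e1: "hcat P R = four_block_mat P R (0\<^sub>m 0 b1) (0\<^sub>m 0 b2)" using P R unfolding hcat_def by auto
  have e2: "X @\<^sub>r Y = four_block_mat X (0\<^sub>m b1 0) Y (0\<^sub>m b2 0)" using X Y unfolding append_rows_def by auto
  have "hcat P R * (X @\<^sub>r Y) = four_block_mat (P * X + R * Y) (P * 0\<^sub>m b1 0 + R * 0\<^sub>m b2 0)
      (0\<^sub>m 0 b1 * X + 0\<^sub>m 0 b2 * Y) (0\<^sub>m 0 b1 * 0\<^sub>m b1 0 + 0\<^sub>m 0 b2 * 0\<^sub>m b2 0)"
    unfolding e1 e2 using P R X Y
    by (intro mult_four_block_mat) auto
  also have "\<dots> = P * X + R * Y"
    using P R X Y by (intro eq_matI) auto
  finally show ?thesis .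
qed

lemma app_mult:
  assumes X: "X \<in> carrier_mat c1 e" and Y: "Y \<in> carrier_mat c2 e" and K: "K \<in> carrier_mat e f"
  shows "(X @\<^sub>r Y) * K = (X * K) @\<^sub>r (Y * K)"
proof -
  have "(X @\<^sub>r Y) * K = four_block_mat X (0\<^sub>m c1 0) Y (0\<^sub>m c2 0) * four_block_mat K (0\<^sub>m e 0) (0\<^sub>m 0 f) (0\<^sub>m 0 0)"
    using X Y K unfolding append_rows_def by (intro arg_cong2[where f="(*)"] eq_matI) auto
  also have "\<dots> = four_block_mat (X * K + 0\<^sub>m c1 0 * 0\<^sub>m 0 f) (X * 0\<^sub>m e 0 + 0\<^sub>m c1 0 * 0\<^sub>m 0 0)
     (Y * K + 0\<^sub>m c2 0 * 0\<^sub>m 0 f) (Y * 0\<^sub>m e 0 + 0\<^sub>m c2 0 * 0\<^sub>m 0 0)"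
    using X Y K by (intro mult_four_block_mat) auto
  also have "\<dots> = (X * K) @\<^sub>r (Y * K)"
    using X Y K unfolding append_rows_def by (intro eq_matI) auto
  finally show ?thesis .
qed

lemma mult_hcat:
  assumes K: "(K :: real mat) \<in> carrier_mat a b" and P: "P \<in> carrier_mat b c1" and R: "R \<in> carrier_mat b c2"
  shows "K * hcat P R = hcat (K * P) (K * R)"
proof -
  have "transpose_mat (K * hcat P R) = transpose_mat (hcat P R) * transpose_mat K"
    using transpose_mult[OF K hcat_carrier[OF P R]] .
  also have "\<dots> = (transpose_mat P @\<^sub>r transpose_mat R) * transpose_mat K"
    using P R by (simp add: transpose_hcat)
  also have "\<dots> = (transpose_mat P * transpose_mat K) @\<^sub>r (transpose_mat R * transpose_mat K)"
    using K P R by (intro app_mult) auto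
  also have "\<dots> = transpose_mat (K * P) @\<^sub>r transpose_mat (K * R)"
    using K P R by (simp add: transpose_mult[of _ a b])
  also have "\<dots> = transpose_mat (hcat (K * P) (K * R))"
    using K P R by (intro transpose_hcat[symmetric]) auto
  finally have "transpose_mat (K * hcat P R) = transpose_mat (hcat (K * P) (K * R))" .
  then show ?thesis by (metis transpose_transpose)
qed

lemma hcat_add: "P \<in> carrier_mat a b1 \<Longrightarrow> R \<in> carrier_mat a b2 \<Longrightarrow> P' \<in> carrier_mat a b1 \<Longrightarrow> R' \<in> carrier_mat a b2 \<Longrightarrow>
  hcat P R + hcat P' R' = hcat (P + P') (R + R')"
  unfolding hcat_def by (rule eq_matI) auto

lemma app_inj: assumes "X \<in> carrier_mat c1 e" "Y \<in> carrier_mat c2 e" "X' \<in> carrier_mat c1 e" "Y' \<in> carrier_mat c2 e"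
  and eq: "X @\<^sub>r Y = X' @\<^sub>r Y'"
  shows "X = X' \<and> Y = Y'"
proof
  show "X = X'"
  proof (rule eq_matI)
    fix i j assume "i < dim_row X'" "j < dim_col X'"
    then show "X $$ (i,j) = X' $$ (i,j)"
      using arg_cong[OF eq, of "\<lambda>M. M $$ (i,j)"] assms(1-4) by (auto simp: app_index)
  qed (use assms in auto)
  show "Y = Y'"
  proof (rule eq_matI)
    fix i j assume "i < dim_row Y'" "j < dim_col Y'"
    then show "Y $$ (i,j) = Y' $$ (i,j)"
      using arg_cong[OF eq, of "\<lambda>M. M $$ (i + c1,j)"] assms(1-4) by (auto simp: app_index)
  qed (use assms in auto)
qed

lemma hcat_inj: assumes "P \<in> carrier_mat a b1" "R \<in> carrier_mat a b2" "P' \<in> carrier_mat a b1" "R' \<in> carrier_mat a b2"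
  and eq: "hcat P R = hcat P' R'"
  shows "P = P' \<and> R = R'"
proof -
  have "transpose_mat P @\<^sub>r transpose_mat R = transpose_mat P' @\<^sub>r transpose_mat R'"
    using eq assms by (metis transpose_hcat)
  then have "transpose_mat P = transpose_mat P' \<and> transpose_mat R = transpose_mat R'"
    using assms by (intro app_inj) auto
  then show ?thesis by (metis transpose_transpose)
qed

lemma one_split: "1\<^sub>m (a + b) = hcat (1\<^sub>m a) (0\<^sub>m a b) @\<^sub>r hcat (0\<^sub>m b a) (1\<^sub>m b)"
  unfolding append_rows_def hcat_def by (rule eq_matI) auto

definition tr :: "real mat \<Rightarrow> real" where "tr K = (\<Sum>i<dim_row K. K $$ (i,i))"

lemma tr_comm: assumes A: "A \<in> carrier_mat a b" and B: "B \<in> carrier_mat b a"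
  shows "tr (A * B) = tr (B * A)"
proof -
  have "tr (A * B) = (\<Sum>i<a. \<Sum>j<b. A $$ (i,j) * B $$ (j,i))"
    using A B by (auto simp: tr_def scalar_prod_def atLeast0LessThan intro!: sum.cong)
  also have "\<dots> = (\<Sum>j<b. \<Sum>i<a. B $$ (j,i) * A $$ (i,j))"
    by (subst sum.swap) (simp add: mult.commute)
  also have "\<dots> = tr (B * A)"
    using A B by (auto simp: tr_def scalar_prod_def atLeast0LessThan intro!: sum.cong)
  finally show ?thesis .
qed

lemma tr_add: "A \<in> carrier_mat a a \<Longrightarrow> B \<in> carrier_mat a a \<Longrightarrow> tr (A + B) = tr A + tr B"
  by (auto simp: tr_def sum.distrib)

lemma tr_uminus: "A \<in> carrier_mat a a \<Longrightarrow> tr (- A) = - tr A"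
  by (auto simp: tr_def sum_negf)

lemma tr_KKt: assumes K: "K \<in> carrier_mat a b"
  shows "tr (K * transpose_mat K) = (\<Sum>i<a. \<Sum>j<b. (K $$ (i,j))\<^sup>2)"
  using K by (auto simp: tr_def scalar_prod_def atLeast0LessThan power2_eq_square intro!: sum.cong)

lemma tr_KKt_nonneg: "K \<in> carrier_mat a b \<Longrightarrow> 0 \<le> tr (K * transpose_mat K)"
  by (simp add: tr_KKt sum_nonneg)

lemma fro_sq: "K \<in> carrier_mat a b \<Longrightarrow> (fro_norm K)\<^sup>2 = tr (K * transpose_mat K)"
  by (simp add: fro_norm_def tr_KKt sum_nonneg)


lemma gram_blocks:
  assumes P: "(P :: real mat) \<in> carrier_mat a b1" and R: "R \<in> carrier_mat a b2"
    and g: "transpose_mat (hcat P R) * hcat P R = 1\<^sub>m (b1 + b2)"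
  shows "transpose_mat P * P = 1\<^sub>m b1" "transpose_mat P * R = 0\<^sub>m b1 b2"
    "transpose_mat R * R = 1\<^sub>m b2"
proof -
  have "transpose_mat (hcat P R) * hcat P R = (transpose_mat P @\<^sub>r transpose_mat R) * hcat P R"
    using P R by (simp add: transpose_hcat)
  also have "\<dots> = (transpose_mat P * hcat P R) @\<^sub>r (transpose_mat R * hcat P R)"
    using P R by (intro app_mult) auto
  also have "\<dots> = hcat (transpose_mat P * P) (transpose_mat P * R) @\<^sub>r hcat (transpose_mat R * P) (transpose_mat R * R)"
    using P R by (simp add: mult_hcat[of _ b1 a] mult_hcat[of _ b2 a])
  finally have "hcat (transpose_mat P * P) (transpose_mat P * R) @\<^sub>r hcat (transpose_mat R * P) (transpose_mat R * R)
     = 1\<^sub>m (b1 + b2)" using g by metis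
  then have "hcat (transpose_mat P * P) (transpose_mat P * R) @\<^sub>r hcat (transpose_mat R * P) (transpose_mat R * R)
     = hcat (1\<^sub>m b1) (0\<^sub>m b1 b2) @\<^sub>r hcat (0\<^sub>m b2 b1) (1\<^sub>m b2)"
    by (metis one_split)
  moreover have c1: "hcat (transpose_mat P * P) (transpose_mat P * R) \<in> carrier_mat b1 (b1+b2)"
    using P R by (intro hcat_carrier) auto
  moreover have c2: "hcat (transpose_mat R * P) (transpose_mat R * R) \<in> carrier_mat b2 (b1+b2)"
    using P R by (intro hcat_carrier) auto
  moreover have c3: "hcat (1\<^sub>m b1) (0\<^sub>m b1 b2) \<in> carrier_mat b1 (b1+b2)" by (intro hcat_carrier) auto
  moreover have c4: "hcat (0\<^sub>m b2 b1) (1\<^sub>m b2) \<in> carrier_mat b2 (b1+b2)" by (intro hcat_carrier) auto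
  ultimately have e: "hcat (transpose_mat P * P) (transpose_mat P * R) = hcat (1\<^sub>m b1) (0\<^sub>m b1 b2)"
     "hcat (transpose_mat R * P) (transpose_mat R * R) = hcat (0\<^sub>m b2 b1) (1\<^sub>m b2)"
    using app_inj by blast+
  have PP: "transpose_mat P * P \<in> carrier_mat b1 b1" "transpose_mat P * R \<in> carrier_mat b1 b2"
    "transpose_mat R * P \<in> carrier_mat b2 b1" "transpose_mat R * R \<in> carrier_mat b2 b2" using P R by auto
  show "transpose_mat P * P = 1\<^sub>m b1" "transpose_mat P * R = 0\<^sub>m b1 b2"
    using hcat_inj[OF PP(1,2) _ _ e(1)] by auto
  show "transpose_mat R * R = 1\<^sub>m b2"
    using hcat_inj[OF PP(3,4) _ _ e(2)] by auto
qed

lemma outer_blocks: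
  assumes P: "(P :: real mat) \<in> carrier_mat a b1" and R: "R \<in> carrier_mat a b2" and ab: "b1 + b2 = a"
    and g: "transpose_mat (hcat P R) * hcat P R = 1\<^sub>m (b1 + b2)"
  shows "P * transpose_mat P + R * transpose_mat R = 1\<^sub>m a"
proof -
  have H: "hcat P R \<in> carrier_mat a a" using P R ab by (metis hcat_carrier)
  have "hcat P R * transpose_mat (hcat P R) = 1\<^sub>m a"
    using mat_mult_left_right_inverse[OF transpose_carrier_mat[THEN iffD2, OF H] H] g ab by simp
  moreover have "hcat P R * transpose_mat (hcat P R) = P * transpose_mat P + R * transpose_mat R"
    using P R by (simp add: transpose_hcat hcat_mult_app)
  ultimately show ?thesis by simp
qed

lemma colspace_sub:
  assumes M: "M \<in> carrier_mat a b" and N: "N \<in> carrier_mat a c" and sub: "colspace M \<subseteq> colspace N"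
  shows "\<exists>T \<in> carrier_mat c b. M = N * T"
proof -
  have "\<forall>j. \<exists>x. j < b \<longrightarrow> x \<in> carrier_vec c \<and> col M j = N *\<^sub>v x"
  proof (intro allI impI)
    fix j
    show "\<exists>x. j < b \<longrightarrow> x \<in> carrier_vec c \<and> col M j = N *\<^sub>v x"
    proof (cases "j < b")
      case True
      have "M *\<^sub>v unit_vec b j = col M j"
        using M True by (intro eq_vecI) auto
      then have "col M j \<in> colspace M" unfolding colspace_def using M
        by (metis (mono_tags, lifting) carrier_matD(2) mem_Collect_eq unit_vec_carrier)
      then have "col M j \<in> colspace N" using sub by auto
      then show ?thesis using N unfolding colspace_def by auto
    qed auto
  qed
  then obtain f where f: "\<And>j. j < b \<Longrightarrow> f j \<in> carrier_vec c \<and> col M j = N *\<^sub>v f j"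
    by metis
  define T where "T = mat c b (\<lambda>(i,j). f j $ i)"
  have T: "T \<in> carrier_mat c b" unfolding T_def by auto
  have colT: "col T j = f j" if "j < b" for j
    using f[OF that] that unfolding T_def by (intro eq_vecI) auto
  have "M = N * T"
  proof (rule eq_matI)
    fix i j assume i: "i < dim_row (N * T)" and j: "j < dim_col (N * T)"
    then have ij: "i < a" "j < b" using N T by auto
    have "(N * T) $$ (i,j) = row N i \<bullet> col T j" using ij N T by auto
    also have "\<dots> = (N *\<^sub>v f j) $ i" using colT ij N by auto
    also have "\<dots> = col M j $ i" using f ij by auto
    also have "\<dots> = M $$ (i,j)" using M ij by auto
    finally show "M $$ (i,j) = (N * T) $$ (i,j)" by simp
  qed (use M N T in auto)
  then show ?thesis using T by blast
qed

lemma minus_zero_eq: assumes X: "(X :: real mat) \<in> carrier_mat a b" and Y: "Y \<in> carrier_mat a b" and h: "X - Y = 0\<^sub>m a b"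
  shows "X = Y"
proof (rule eq_matI)
  fix i j assume ij: "i < dim_row Y" "j < dim_col Y"
  have "(X - Y) $$ (i,j) = 0" using ij Y by (simp add: h)
  then show "X $$ (i,j) = Y $$ (i,j)" using ij X Y by simp
qed (use X Y in auto)

lemma hcat_mult_Z:
  assumes P: "(P :: real mat) \<in> carrier_mat a n" and R: "R \<in> carrier_mat a d" and X: "X \<in> carrier_mat n d"
  shows "hcat P R * (X @\<^sub>r (- 1\<^sub>m d)) = P * X - R"
proof -
  have "hcat P R * (X @\<^sub>r (- 1\<^sub>m d)) = P * X + R * (- 1\<^sub>m d)"
    using P R X by (intro hcat_mult_app) auto
  also have "R * (- 1\<^sub>m d) = - R" using R by simp
  also have "P * X + - R = P * X - R" using P R X by (simp add: minus_add_uminus_mat[symmetric, of _ a d])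
  finally show ?thesis .
qed

locale tl =
  fixes p q n d :: nat
    and A B C D :: "real mat"
    and Q1 Q2 U1 U2 V1 V2 V11 V21 V12 V22 :: "real mat"
    and \<sigma> :: "nat \<Rightarrow> real"
  assumes pos: "0 < p" "0 < q" "0 < n" "0 < d"
    and pn: "p \<le> n" and qge: "n + d - p \<le> q"
    and A: "A \<in> carrier_mat q n" and B: "B \<in> carrier_mat q d"
    and C: "C \<in> carrier_mat p n" and D: "D \<in> carrier_mat p d"
    and Crank: "full_row_rank C"
    and Q1: "Q1 \<in> carrier_mat (n + d) p" and Q2: "Q2 \<in> carrier_mat (n + d) (n + d - p)"
    and Qorth: "orthogonal_of_order (n + d) (hcat Q1 Q2)"
    and Qrange: "colspace Q1 = colspace (transpose_mat (hcat C D))"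
    and U1: "U1 \<in> carrier_mat q (n - p)" and U2: "U2 \<in> carrier_mat q (d)"
    and Uorth: "orthonormal_cols (hcat U1 U2)"
    and V1: "V1 \<in> carrier_mat (n + d - p) (n - p)" and V2: "V2 \<in> carrier_mat (n + d - p) d"
    and Vorth: "orthogonal_of_order (n + d - p) (hcat V1 V2)"
    and \<sigma>_mono: "\<And>i j. i \<le> j \<Longrightarrow> j < n + d - p \<Longrightarrow> \<sigma> j \<le> \<sigma> i"
    and \<sigma>_nonneg: "\<And>i. i < n + d - p \<Longrightarrow> 0 \<le> \<sigma> i"
    and svd: "hcat A B * Q2 = hcat U1 U2 * mat_diag (n + d - p) \<sigma> * transpose_mat (hcat V1 V2)"
    and V11: "V11 \<in> carrier_mat n (n - p)" and V21: "V21 \<in> carrier_mat d (n - p)"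
    and V12: "V12 \<in> carrier_mat n d" and V22: "V22 \<in> carrier_mat d d"
    and Vbar1: "Q2 * V1 = V11 @\<^sub>r V21"
    and Vbar2: "Q2 * V2 = V12 @\<^sub>r V22"
    and gap: "n - p > 0 \<Longrightarrow> \<sigma> (n - p - 1) > \<sigma> (n - p)"
    and V22_inv: "invertible_mat V22"
begin

definition "k = n - p"
definition "r = n + d - p"
definition "m = n + d"
definition "Q = hcat Q1 Q2"
definition "U = hcat U1 U2"
definition "V = hcat V1 V2"
definition "Ct = hcat C D"
definition "At = hcat A B"
definition "Sig = mat_diag r \<sigma>"
definition "V22i = the (mat_inverse V22)"
definition "Xn = - (V12 * V22i)"
definition "Zx X = X @\<^sub>r (- 1\<^sub>m d)"

lemma dims: "k + d = r" "p + r = m" "p + k = n" "k < r"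
  using pn pos unfolding k_def r_def m_def by auto

lemma carr[simp]: "A \<in> carrier_mat q n" "B \<in> carrier_mat q d" "C \<in> carrier_mat p n" "D \<in> carrier_mat p d"
  "Q1 \<in> carrier_mat m p" "Q2 \<in> carrier_mat m r" "U1 \<in> carrier_mat q k" "U2 \<in> carrier_mat q d"
  "V1 \<in> carrier_mat r k" "V2 \<in> carrier_mat r d" "V11 \<in> carrier_mat n k" "V21 \<in> carrier_mat d k"
  "V12 \<in> carrier_mat n d" "V22 \<in> carrier_mat d d"
  using A B C D Q1 Q2 U1 U2 V1 V2 V11 V21 V12 V22 unfolding k_def r_def m_def by auto

lemma carr2[simp]: "Q \<in> carrier_mat m m" "U \<in> carrier_mat q r" "V \<in> carrier_mat r r" "Ct \<in> carrier_mat p m"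
  "At \<in> carrier_mat q m" "Sig \<in> carrier_mat r r"
proof -
  show "Q \<in> carrier_mat m m" unfolding Q_def using hcat_carrier[OF carr(5,6)] dims by simp
  show "U \<in> carrier_mat q r" unfolding U_def using hcat_carrier[OF carr(7,8)] dims by simp
  show "V \<in> carrier_mat r r" unfolding V_def using hcat_carrier[OF carr(9,10)] dims by simp
  show "Ct \<in> carrier_mat p m" unfolding Ct_def using hcat_carrier[OF carr(3,4)] dims by (simp add: m_def)
  show "At \<in> carrier_mat q m" unfolding At_def using hcat_carrier[OF carr(1,2)] dims by (simp add: m_def)
  show "Sig \<in> carrier_mat r r" unfolding Sig_def by simp
qed

end


lemma assoc': "dim_col (A :: real mat) = dim_row B \<Longrightarrow> dim_col B = dim_row C \<Longrightarrow> A * B * C = A * (B * C)"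
  by (rule assoc_mult_mat[of A "dim_row A" "dim_col A" B "dim_col B" C "dim_col C"]) auto

lemma add_mult_distrib': "dim_row (A :: real mat) = dim_row B \<Longrightarrow> dim_col A = dim_col B \<Longrightarrow> dim_col A = dim_row C \<Longrightarrow>
  (A + B) * C = A * C + B * C"
  by (rule add_mult_distrib_mat[of A "dim_row A" "dim_col A" B C "dim_col C"]) auto

lemma mult_add_distrib': "dim_row (B :: real mat) = dim_row C \<Longrightarrow> dim_col B = dim_col C \<Longrightarrow> dim_col A = dim_row B \<Longrightarrow>
  A * (B + C) = A * B + A * C"
  by (rule mult_add_distrib_mat[of A "dim_row A" "dim_col A" B "dim_col B" C]) auto

lemma transpose_mult': "dim_col (A :: real mat) = dim_row B \<Longrightarrow> transpose_mat (A * B) = transpose_mat B * transpose_mat A"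
  by (rule transpose_mult[of A "dim_row A" "dim_col A" B "dim_col B"]) auto

lemma cancel_left: "(P :: real mat) * R = 1\<^sub>m a \<Longrightarrow> dim_row X = a \<Longrightarrow> dim_col R = a \<Longrightarrow> dim_col P = dim_row R \<Longrightarrow> P * (R * X) = X"
  by (metis assoc' left_mult_one_mat' index_mult_mat(2))

lemma left_add_zero'[simp]: "dim_row (K :: real mat) = a \<Longrightarrow> dim_col K = b \<Longrightarrow> 0\<^sub>m a b + K = K"
  by (rule eq_matI) auto

lemma right_add_zero'[simp]: "dim_row (K :: real mat) = a \<Longrightarrow> dim_col K = b \<Longrightarrow> K + 0\<^sub>m a b = K"
  by (rule eq_matI) auto

lemma uminus_zero'[simp]: "- 0\<^sub>m a b = (0\<^sub>m a b :: real mat)"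
  by (rule eq_matI) auto

lemma add_neg_zero: "(K :: real mat) \<in> carrier_mat a b \<Longrightarrow> K + - K = 0\<^sub>m a b"
  by (rule eq_matI) auto

context tl begin

lemma dimsimp[simp]:
  "dim_row A = q" "dim_col A = n" "dim_row B = q" "dim_col B = d" "dim_row C = p" "dim_col C = n"
  "dim_row D = p" "dim_col D = d" "dim_row Q1 = m" "dim_col Q1 = p" "dim_row Q2 = m" "dim_col Q2 = r"
  "dim_row U1 = q" "dim_col U1 = k" "dim_row U2 = q" "dim_col U2 = d" "dim_row V1 = r" "dim_col V1 = k"
  "dim_row V2 = r" "dim_col V2 = d" "dim_row V11 = n" "dim_col V11 = k" "dim_row V21 = d" "dim_col V21 = k"
  "dim_row V12 = n" "dim_col V12 = d" "dim_row V22 = d" "dim_col V22 = d"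
  "dim_row Q = m" "dim_col Q = m" "dim_row U = q" "dim_col U = r" "dim_row V = r" "dim_col V = r"
  "dim_row Ct = p" "dim_col Ct = m" "dim_row At = q" "dim_col At = m" "dim_row Sig = r" "dim_col Sig = r"
  using carr carr2 by (simp_all only: carrier_mat_def mem_Collect_eq)

lemma Qblocks: "transpose_mat Q1 * Q2 = 0\<^sub>m p r" "transpose_mat Q2 * Q2 = 1\<^sub>m r"
  "Q1 * transpose_mat Q1 + Q2 * transpose_mat Q2 = 1\<^sub>m m"
proof -
  have g: "transpose_mat (hcat Q1 Q2) * hcat Q1 Q2 = 1\<^sub>m (p + r)"
    using Qorth dims unfolding orthogonal_of_order_def m_def by simp
  show "transpose_mat Q1 * Q2 = 0\<^sub>m p r" "transpose_mat Q2 * Q2 = 1\<^sub>m r"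
    using gram_blocks[OF carr(5,6) g] by auto
  show "Q1 * transpose_mat Q1 + Q2 * transpose_mat Q2 = 1\<^sub>m m"
    using outer_blocks[OF carr(5,6) dims(2) g] .
qed

lemma Ublocks: "transpose_mat U1 * U1 = 1\<^sub>m k" "transpose_mat U * U = 1\<^sub>m r"
proof -
  have g: "transpose_mat (hcat U1 U2) * hcat U1 U2 = 1\<^sub>m (k + d)"
    using Uorth carr unfolding orthonormal_cols_def by simp
  show "transpose_mat U1 * U1 = 1\<^sub>m k" using gram_blocks[OF carr(7,8) g] by auto
  show "transpose_mat U * U = 1\<^sub>m r" using g dims unfolding U_def by simp
qed

lemma Vblocks: "transpose_mat V1 * V2 = 0\<^sub>m k d" "transpose_mat V2 * V2 = 1\<^sub>m d"
  "V1 * transpose_mat V1 + V2 * transpose_mat V2 = 1\<^sub>m r"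
  "transpose_mat V * V = 1\<^sub>m r" "V * transpose_mat V = 1\<^sub>m r"
proof -
  have g: "transpose_mat (hcat V1 V2) * hcat V1 V2 = 1\<^sub>m (k + d)"
    using Vorth dims unfolding orthogonal_of_order_def r_def k_def by simp
  show "transpose_mat V1 * V2 = 0\<^sub>m k d" "transpose_mat V2 * V2 = 1\<^sub>m d"
    using gram_blocks[OF carr(9,10) g] by auto
  show o: "V1 * transpose_mat V1 + V2 * transpose_mat V2 = 1\<^sub>m r"
    using outer_blocks[OF carr(9,10) dims(1) g] .
  show "transpose_mat V * V = 1\<^sub>m r" using g dims unfolding V_def by simp
  have "hcat V1 V2 * transpose_mat (hcat V1 V2) = V1 * transpose_mat V1 + V2 * transpose_mat V2"
    by (subst transpose_hcat[OF carr(9,10)], rule hcat_mult_app[OF carr(9,10), of _ r]) auto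
  then show "V * transpose_mat V = 1\<^sub>m r" using o unfolding V_def by simp
qed

lemma ranges: "\<exists>T \<in> carrier_mat p p. Q1 = transpose_mat Ct * T"
  "\<exists>S \<in> carrier_mat p p. transpose_mat Ct = Q1 * S"
proof -
  have Ctt: "transpose_mat Ct \<in> carrier_mat m p" by simp
  show "\<exists>T \<in> carrier_mat p p. Q1 = transpose_mat Ct * T"
    using colspace_sub[OF carr(5) Ctt] Qrange unfolding Ct_def by simp
  show "\<exists>S \<in> carrier_mat p p. transpose_mat Ct = Q1 * S"
    using colspace_sub[OF Ctt carr(5)] Qrange unfolding Ct_def by simp
qed

lemma CtQ2: "Ct * Q2 = 0\<^sub>m p r"
proof -
  obtain S where S: "S \<in> carrier_mat p p" and e: "transpose_mat Ct = Q1 * S" using ranges by blast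
  have "Ct = transpose_mat (Q1 * S)" by (metis e transpose_transpose)
  also have "\<dots> = transpose_mat S * transpose_mat Q1" using S by (intro transpose_mult[of _ m p]) auto
  finally have "Ct * Q2 = transpose_mat S * transpose_mat Q1 * Q2" by simp
  also have "\<dots> = transpose_mat S * (transpose_mat Q1 * Q2)" using S by (intro assoc_mult_mat[of _ p p _ m _ r]) auto
  also have "\<dots> = 0\<^sub>m p r" using S by (simp add: Qblocks)
  finally show ?thesis .
qed

lemma null_Q2: assumes Z: "Z \<in> carrier_mat m d" and CZ: "Ct * Z = 0\<^sub>m p d"
  shows "Q2 * (transpose_mat Q2 * Z) = Z"
proof -
  obtain T where T: "T \<in> carrier_mat p p" and e: "Q1 = transpose_mat Ct * T" using ranges by blast
  have "transpose_mat Q1 = transpose_mat T * Ct" unfolding e using T by (subst transpose_mult[of _ m p]) auto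
  then have "transpose_mat Q1 * Z = transpose_mat T * Ct * Z" by simp
  also have "\<dots> = transpose_mat T * (Ct * Z)" using T Z by (intro assoc_mult_mat[of _ p p _ m _ d]) auto
  also have "\<dots> = 0\<^sub>m p d" using T by (simp add: CZ)
  finally have Q1Z: "transpose_mat Q1 * Z = 0\<^sub>m p d" .
  have "Z = 1\<^sub>m m * Z" using Z by simp
  also have "\<dots> = (Q1 * transpose_mat Q1 + Q2 * transpose_mat Q2) * Z" by (simp add: Qblocks)
  also have "\<dots> = Q1 * transpose_mat Q1 * Z + Q2 * transpose_mat Q2 * Z"
    using Z mult_carrier_mat[OF carr(5) transpose_carrier_mat[THEN iffD2, OF carr(5)]]
      mult_carrier_mat[OF carr(6) transpose_carrier_mat[THEN iffD2, OF carr(6)]]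
    by (intro add_mult_distrib_mat[of _ m m]) auto
  also have "Q1 * transpose_mat Q1 * Z = Q1 * (transpose_mat Q1 * Z)" using Z by (intro assoc_mult_mat[of _ m p _ m _ d]) auto
  also have "\<dots> = 0\<^sub>m m d" by (simp add: Q1Z right_mult_zero_mat[OF carr(5)])
  also have "Q2 * transpose_mat Q2 * Z = Q2 * (transpose_mat Q2 * Z)" using Z by (intro assoc_mult_mat[of _ m r _ m _ d]) auto
  finally have e: "Z = 0\<^sub>m m d + Q2 * (transpose_mat Q2 * Z)" .
  have c: "Q2 * (transpose_mat Q2 * Z) \<in> carrier_mat m d"
    using Z carr(6) by (metis mult_carrier_mat transpose_carrier_mat)
  from e c show ?thesis by (metis left_add_zero_mat)
qed


lemma cancels[simp]:
  "dim_row X = r \<Longrightarrow> transpose_mat Q2 * (Q2 * X) = X"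
  "dim_row X = d \<Longrightarrow> transpose_mat V2 * (V2 * X) = X"
  "dim_row X = r \<Longrightarrow> transpose_mat V * (V * X) = X"
  "dim_row X = r \<Longrightarrow> V * (transpose_mat V * X) = X"
  "dim_row X = r \<Longrightarrow> transpose_mat U * (U * X) = X"
  "dim_row X = k \<Longrightarrow> transpose_mat U1 * (U1 * X) = X"
  by (rule cancel_left, simp_all add: Qblocks Vblocks Ublocks)+

lemma V22i: "V22 * V22i = 1\<^sub>m d" "V22i * V22 = 1\<^sub>m d" "V22i \<in> carrier_mat d d"
proof -
  obtain Bi where b1: "V22 * Bi = 1\<^sub>m d" and b2: "Bi * V22 = 1\<^sub>m (dim_row Bi)"
    using V22_inv unfolding invertible_mat_def inverts_mat_def by auto
  have "dim_col Bi = d" using arg_cong[OF b1, of dim_col] by simp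
  moreover have "dim_row Bi = d" using arg_cong[OF b2, of dim_col] by simp
  ultimately have Bi: "Bi \<in> carrier_mat d d" by auto
  have U: "V22 \<in> Units (ring_mat TYPE(real) d ())"
    unfolding Units_def ring_mat_simps using Bi b1 b2 \<open>dim_row Bi = d\<close> by auto
  have "V22 * V22i = 1\<^sub>m d \<and> V22i * V22 = 1\<^sub>m d \<and> V22i \<in> carrier_mat d d"
  proof (cases "mat_inverse V22")
    case None
    have nU: "V22 \<notin> Units (ring_mat TYPE(real) d ())" by (rule mat_inverse(1)[OF carr(14) None])
    from nU U show ?thesis by contradiction
  next
    case (Some B')
    then show ?thesis using mat_inverse(2)[OF carr(14) Some] unfolding V22i_def by auto
  qed
  then show "V22 * V22i = 1\<^sub>m d" "V22i * V22 = 1\<^sub>m d" "V22i \<in> carrier_mat d d" by auto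
qed

lemma V22i_dims[simp]: "dim_row V22i = d" "dim_col V22i = d" using V22i(3) by auto

lemma Xn_carr[simp]: "Xn \<in> carrier_mat n d" "dim_row Xn = n" "dim_col Xn = d"
  unfolding Xn_def using V22i(3) by auto

lemma Zx_carr[simp]: "dim_row (Zx X) = dim_row X + d" "dim_col (Zx X) = dim_col X"
  unfolding Zx_def by auto

lemma Zx_carr2: "X \<in> carrier_mat n d \<Longrightarrow> Zx X \<in> carrier_mat m d"
  unfolding Zx_def m_def by auto

lemma Q2V1: "Q2 * V1 = V11 @\<^sub>r V21" and Q2V2: "Q2 * V2 = V12 @\<^sub>r V22"
  using Vbar1 Vbar2 by auto

lemma ending:
  assumes X: "X \<in> carrier_mat n d" and CZ: "Ct * Zx X = 0\<^sub>m p d"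
    and VW: "transpose_mat V1 * (transpose_mat Q2 * Zx X) = 0\<^sub>m k d"
  shows "X = Xn"
proof -
  define Z where "Z = Zx X"
  have Xd: "dim_row X = n" "dim_col X = d" using X by auto
  define W where "W = transpose_mat Q2 * Z"
  have Z: "Z \<in> carrier_mat m d" unfolding Z_def using Zx_carr2[OF X] .
  have W: "W \<in> carrier_mat r d" unfolding W_def using Z by auto
  have ZQW: "Q2 * W = Z" unfolding W_def using null_Q2[OF Z] CZ unfolding Z_def by auto
  define Gm where "Gm = transpose_mat V2 * W"
  have Gm: "Gm \<in> carrier_mat d d" unfolding Gm_def using W by auto
  have "W = 1\<^sub>m r * W" using W by simp
  also have "\<dots> = (V1 * transpose_mat V1 + V2 * transpose_mat V2) * W" by (simp add: Vblocks)
  also have "\<dots> = V1 * transpose_mat V1 * W + V2 * transpose_mat V2 * W"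
    using W by (intro add_mult_distrib') auto
  also have "\<dots> = V2 * Gm" using W VW Xd unfolding Gm_def W_def Z_def by (simp add: assoc')
  finally have WV: "W = V2 * Gm" .
  have "Z = (Q2 * V2) * Gm" using ZQW WV Gm by (simp add: assoc')
  also have "\<dots> = (V12 * Gm) @\<^sub>r (V22 * Gm)" unfolding Q2V2 using Gm by (intro app_mult) auto
  finally have eqa: "X @\<^sub>r (- 1\<^sub>m d) = (V12 * Gm) @\<^sub>r (V22 * Gm)" unfolding Z_def Zx_def .
  have c1: "V12 * Gm \<in> carrier_mat n d" by (rule mult_carrier_mat[OF carr(13) Gm])
  have c2: "V22 * Gm \<in> carrier_mat d d" by (rule mult_carrier_mat[OF carr(14) Gm])
  have c3: "- 1\<^sub>m d \<in> carrier_mat d (d::nat)" by simp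
  have e0: "X = V12 * Gm \<and> - 1\<^sub>m d = V22 * Gm" by (rule app_inj[OF X c3 c1 c2 eqa])
  have e: "X = V12 * Gm" "- 1\<^sub>m d = V22 * Gm" using e0 by simp_all
  have "Gm = V22i * V22 * Gm" using Gm by (simp add: V22i)
  also have "\<dots> = V22i * (- 1\<^sub>m d)" using Gm by (simp add: assoc' e(2))
  also have "\<dots> = - V22i" by simp
  finally show "X = Xn" unfolding Xn_def e(1) by simp
qed

lemma Zn: "Q2 * (V2 * (- V22i)) = Zx Xn"
proof -
  have "Q2 * (V2 * (- V22i)) = (Q2 * V2) * (- V22i)" by (simp add: assoc')
  also have "\<dots> = (V12 * (- V22i)) @\<^sub>r (V22 * (- V22i))" unfolding Q2V2 by (intro app_mult) auto
  also have "\<dots> = Zx Xn" unfolding Zx_def Xn_def by (simp add: V22i)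
  finally show ?thesis .
qed

lemma CXn: "C * Xn = D"
proof -
  have "Ct * Zx Xn = (Ct * Q2) * (V2 * (- V22i))" unfolding Zn[symmetric] by (simp add: assoc')
  also have "\<dots> = 0\<^sub>m p d" by (simp add: CtQ2)
  finally have "C * Xn - D = 0\<^sub>m p d" unfolding Ct_def Zx_def hcat_mult_Z[OF carr(3) carr(4) Xn_carr(1)] .
  then show ?thesis by (rule minus_zero_eq[of _ p d, rotated 2]) auto
qed

end


lemma mat_diag_dims[simp]: "dim_row (mat_diag r f) = r" "dim_col (mat_diag r f) = r"
  unfolding mat_diag_def by auto

lemma tr_mat_diag: "tr (mat_diag r f) = (\<Sum>i<r. f i)"
  unfolding tr_def mat_diag_def by simp

lemma transpose_mat_diag[simp]: "transpose_mat (mat_diag r f) = mat_diag r f"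
  unfolding mat_diag_def by (rule eq_matI) auto

lemma mat_diag_one_eq: "(\<And>i. i < k \<Longrightarrow> f i = 1) \<Longrightarrow> mat_diag k f = 1\<^sub>m k"
  unfolding mat_diag_def by (rule eq_matI) auto

context tl begin

definition "Sb = mat_diag r (\<lambda>i. if k \<le> i then \<sigma> i else 0)"
definition "Del0 = - (U * (Sb * (transpose_mat V * transpose_mat Q2)))"
definition "E0 = mat q n (\<lambda>(i,j). Del0 $$ (i,j))"
definition "F0 = mat q d (\<lambda>(i,j). Del0 $$ (i, j + n))"
definition "tail = (\<Sum>i\<in>{k..<r}. (\<sigma> i)\<^sup>2)"
definition "Sel = (0\<^sub>m k d @\<^sub>r 1\<^sub>m d :: real mat)"
definition "Sig1 = mat_diag k \<sigma>"
definition "Ahat = U1 * Sig1 * transpose_mat V11"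
definition "Bhat = U1 * Sig1 * transpose_mat V21"

lemma Sb_dims[simp]: "dim_row Sb = r" "dim_col Sb = r" "dim_row Sel = r" "dim_col Sel = d"
   "dim_row Sig1 = k" "dim_col Sig1 = k"
  unfolding Sb_def Sel_def Sig1_def using dims by auto

lemma Del0_dims[simp]: "dim_row Del0 = q" "dim_col Del0 = m"
  unfolding Del0_def by auto

lemma EF0: "E0 \<in> carrier_mat q n" "F0 \<in> carrier_mat q d" "hcat E0 F0 = Del0"
proof -
  show E: "E0 \<in> carrier_mat q n" and F: "F0 \<in> carrier_mat q d" unfolding E0_def F0_def by auto
  show "hcat E0 F0 = Del0"
  proof (rule eq_matI)
    fix i j assume "i < dim_row Del0" "j < dim_col Del0"
    then have ij: "i < q" "j < n + d" by (auto simp: m_def)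
    show "hcat E0 F0 $$ (i,j) = Del0 $$ (i,j)"
      unfolding hcat_index[OF E F ij] using ij unfolding E0_def F0_def by auto
  qed (use E F in \<open>auto simp: m_def\<close>)
qed

lemma svd': "At * Q2 = U * (Sig * transpose_mat V)"
proof -
  have "At * Q2 = U * Sig * transpose_mat V"
    using svd unfolding At_def U_def Sig_def V_def r_def .
  also have "\<dots> = U * (Sig * transpose_mat V)" by (rule assoc') simp_all
  finally show ?thesis .
qed

lemma Sel': "dim_row G = d \<Longrightarrow> transpose_mat V * (V2 * G) = Sel * G"
proof -
  assume G: "dim_row G = d"
  have "transpose_mat V * V2 = (transpose_mat V1 @\<^sub>r transpose_mat V2) * V2"
    unfolding V_def by (simp add: transpose_hcat[OF carr(9,10)])
  also have "\<dots> = (transpose_mat V1 * V2) @\<^sub>r (transpose_mat V2 * V2)"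
    by (rule app_mult[of _ k r _ d _ d]) auto
  also have "\<dots> = Sel" unfolding Sel_def by (simp add: Vblocks)
  finally have "transpose_mat V * V2 = Sel" .
  moreover have "transpose_mat V * (V2 * G) = (transpose_mat V * V2) * G" using G by (simp add: assoc')
  ultimately show ?thesis by simp
qed

lemma SigSel': "dim_row G = d \<Longrightarrow> Sig * (Sel * G) = Sb * (Sel * G)"
proof -
  assume G: "dim_row G = d"
  have SelC: "Sel \<in> carrier_mat r d" by (auto intro!: carrier_matI)
  have "Sig * Sel = Sb * Sel"
    unfolding Sig_def Sb_def mat_diag_mult_left[OF SelC]
  proof (rule eq_matI)
    fix i j assume ij: "i < dim_row (mat r d (\<lambda>(i, j). (if k \<le> i then \<sigma> i else 0) * Sel $$ (i, j)))"
       "j < dim_col (mat r d (\<lambda>(i, j). (if k \<le> i then \<sigma> i else 0) * Sel $$ (i, j)))"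
    then have ij': "i < k + d" "j < d" using dims by auto
    have "Sel $$ (i,j) = (if i < k then 0 else 1\<^sub>m d $$ (i - k, j))"
      unfolding Sel_def append_rows_def using ij' by simp
    then show "mat r d (\<lambda>(i, j). \<sigma> i * Sel $$ (i, j)) $$ (i, j) =
         mat r d (\<lambda>(i, j). (if k \<le> i then \<sigma> i else 0) * Sel $$ (i, j)) $$ (i, j)"
      using ij ij' by auto
  qed auto
  moreover have "Sig * (Sel * G) = (Sig * Sel) * G" using G by (simp add: assoc')
  moreover have "Sb * (Sel * G) = (Sb * Sel) * G" using G by (simp add: assoc')
  ultimately show ?thesis by simp
qed

lemma feas0: "(A + E0) * Xn = B + F0"
proof -
  define G where "G = - V22i"
  have G: "dim_row G = d" "dim_col G = d" unfolding G_def by auto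
  have Zn': "Zx Xn = Q2 * (V2 * G)" unfolding G_def by (rule Zn[symmetric])
  have a1: "At * Zx Xn = U * (Sb * (Sel * G))"
    unfolding Zn' using G by (simp add: assoc'[symmetric] svd') (simp add: assoc' Sel' SigSel')
  have a2: "Del0 * Zx Xn = - (U * (Sb * (Sel * G)))"
    unfolding Zn' Del0_def using G by (simp add: assoc' Sel')
  have Kc: "U * (Sb * (Sel * G)) \<in> carrier_mat q d" using G by (intro carrier_matI) simp_all
  have "At * Zx Xn + Del0 * Zx Xn = 0\<^sub>m q d"
    unfolding a1 a2 by (rule add_neg_zero[OF Kc])
  moreover have "(At + Del0) * Zx Xn = At * Zx Xn + Del0 * Zx Xn"
    by (rule add_mult_distrib') (auto simp: m_def)
  moreover have "At + Del0 = hcat (A + E0) (B + F0)"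
    unfolding At_def EF0(3)[symmetric] by (rule hcat_add) (auto simp: EF0)
  ultimately have "hcat (A + E0) (B + F0) * Zx Xn = 0\<^sub>m q d" by simp
  then have "(A + E0) * Xn - (B + F0) = 0\<^sub>m q d"
    unfolding Zx_def by (subst (asm) hcat_mult_Z[of _ q]) (auto simp: EF0)
  moreover have "(A + E0) * Xn \<in> carrier_mat q d" using EF0 by (intro carrier_matI) auto
  moreover have "B + F0 \<in> carrier_mat q d" using EF0 by auto
  ultimately show ?thesis by (intro minus_zero_eq[of "(A + E0) * Xn" q d "B + F0"])
qed

lemma norm0: "(fro_norm (hcat E0 F0))\<^sup>2 = tail"
proof -
  define K where "K = U * (Sb * (transpose_mat V * transpose_mat Q2))"
  have K: "K \<in> carrier_mat q m" unfolding K_def by (auto intro!: carrier_matI)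
  have t0: "(fro_norm (hcat E0 F0))\<^sup>2 = tr (Del0 * transpose_mat Del0)"
    unfolding EF0(3) by (rule fro_sq[of _ q m]) (auto intro!: carrier_matI)
  have t1: "Del0 * transpose_mat Del0 = K * transpose_mat K"
    unfolding Del0_def K_def[symmetric] transpose_uminus by simp
  have t2: "K * transpose_mat K = U * (Sb * (Sb * transpose_mat U))"
    unfolding K_def by (simp add: transpose_mult' assoc' Sb_def)
  have t3: "tr (U * (Sb * (Sb * transpose_mat U))) = tr ((Sb * (Sb * transpose_mat U)) * U)"
    by (rule tr_comm[of _ q r]) (auto intro!: carrier_matI)
  have t4: "(Sb * (Sb * transpose_mat U)) * U = mat_diag r (\<lambda>i. (if k \<le> i then \<sigma> i else 0) * (if k \<le> i then \<sigma> i else 0))"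
    by (simp add: assoc' Sb_def Ublocks)
  have "(fro_norm (hcat E0 F0))\<^sup>2 = tr (mat_diag r (\<lambda>i. (if k \<le> i then \<sigma> i else 0) * (if k \<le> i then \<sigma> i else 0)))"
    unfolding t0 t1 t2 t3 t4 ..
  also have "\<dots> = tail"
  proof -
    have "tr (mat_diag r (\<lambda>i. (if k \<le> i then \<sigma> i else 0) * (if k \<le> i then \<sigma> i else 0)))
      = (\<Sum>i\<in>{0..<r}. if k \<le> i then (\<sigma> i)\<^sup>2 else 0)"
      unfolding tr_mat_diag lessThan_atLeast0 by (rule sum.cong) (auto simp: power2_eq_square)
    also have "\<dots> = (\<Sum>i\<in>{0..<k}. if k \<le> i then (\<sigma> i)\<^sup>2 else 0) + (\<Sum>i\<in>{k..<r}. if k \<le> i then (\<sigma> i)\<^sup>2 else 0)"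
      using dims by (subst sum.atLeastLessThan_concat) auto
    also have "\<dots> = tail" unfolding tail_def by simp
    finally show ?thesis .
  qed
  finally show ?thesis .
qed

lemma sigpos: "i < k \<Longrightarrow> 0 < \<sigma> i"
proof -
  assume i: "i < k"
  have "\<sigma> (k - 1) > \<sigma> k" using gap i unfolding k_def by auto
  moreover have "\<sigma> k \<ge> 0" using \<sigma>_nonneg dims by auto
  moreover have "\<sigma> i \<ge> \<sigma> (k - 1)" using \<sigma>_mono[of i "k - 1"] i dims by auto
  ultimately show ?thesis by linarith
qed

lemma V1tV2G: "dim_row G = d \<Longrightarrow> transpose_mat V1 * (V2 * G) = 0\<^sub>m k (dim_col G)"
proof -
  assume G: "dim_row G = d"
  have "transpose_mat V1 * (V2 * G) = (transpose_mat V1 * V2) * G" using G by (simp add: assoc')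
  also have "\<dots> = 0\<^sub>m k (dim_col G)" using G by (simp add: Vblocks)
  finally show ?thesis .
qed

lemma hcatAB: "hcat Ahat Bhat = U1 * (Sig1 * (transpose_mat V1 * transpose_mat Q2))"
proof -
  have e1: "hcat Ahat Bhat = (U1 * Sig1) * hcat (transpose_mat V11) (transpose_mat V21)"
    unfolding Ahat_def Bhat_def by (rule mult_hcat[symmetric, of _ q k]) (auto intro!: carrier_matI)
  have e2: "hcat (transpose_mat V11) (transpose_mat V21) = transpose_mat (Q2 * V1)"
    unfolding Q2V1 by (rule transpose_app[symmetric]) auto
  have e3: "(U1 * Sig1) * transpose_mat (Q2 * V1) = U1 * (Sig1 * (transpose_mat V1 * transpose_mat Q2))"
    by (simp add: assoc' transpose_mult')
  show ?thesis unfolding e1 e2 e3 ..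
qed

lemma AhatXn: "Ahat * Xn = Bhat"
proof -
  have AB: "Ahat \<in> carrier_mat q n" "Bhat \<in> carrier_mat q d" unfolding Ahat_def Bhat_def
    by (auto intro!: carrier_matI)
  have "Ahat * Xn - Bhat = hcat Ahat Bhat * Zx Xn" unfolding Zx_def by (rule hcat_mult_Z[symmetric, OF AB]) simp
  also have "\<dots> = U1 * (Sig1 * (transpose_mat V1 * (V2 * (- V22i))))"
    unfolding hcatAB Zn[symmetric] by (simp add: assoc')
  also have "\<dots> = 0\<^sub>m q d" by (simp add: V1tV2G)
  finally have e: "Ahat * Xn - Bhat = 0\<^sub>m q d" .
  have c1: "Ahat * Xn \<in> carrier_mat q d" using AB by (intro mult_carrier_mat[of _ q n]) auto
  show ?thesis by (rule minus_zero_eq[OF c1 AB(2) e])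
qed


lemma AhatUnique: assumes X: "X \<in> carrier_mat n d" and h: "Ahat * X = Bhat" "C * X = D"
  shows "X = Xn"
proof -
  have AB: "Ahat \<in> carrier_mat q n" "Bhat \<in> carrier_mat q d" unfolding Ahat_def Bhat_def
    by (auto intro!: carrier_matI)
  have Xd: "dim_row X = n" "dim_col X = d" using X by auto
  have CZ: "Ct * Zx X = 0\<^sub>m p d"
    unfolding Ct_def Zx_def hcat_mult_Z[OF carr(3,4) X] h by simp
  have "hcat Ahat Bhat * Zx X = 0\<^sub>m q d"
    unfolding Zx_def hcat_mult_Z[OF AB X] h using AB by simp
  then have e: "U1 * (Sig1 * (transpose_mat V1 * (transpose_mat Q2 * Zx X))) = 0\<^sub>m q d"
    unfolding hcatAB using Xd by (simp add: assoc' m_def[symmetric])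
  define K where "K = transpose_mat V1 * (transpose_mat Q2 * Zx X)"
  have Kd: "dim_row K = k" "dim_col K = d" unfolding K_def using Xd by auto
  have "Sig1 * K = transpose_mat U1 * (U1 * (Sig1 * K))" using Kd by simp
  also have "\<dots> = 0\<^sub>m k d" using e unfolding K_def by simp
  finally have SK: "Sig1 * K = 0\<^sub>m k d" .
  have "K = mat_diag k (\<lambda>i. 1 / \<sigma> i) * Sig1 * K"
  proof -
    have "mat_diag k (\<lambda>i. 1 / \<sigma> i * \<sigma> i) = 1\<^sub>m k"
    proof (rule mat_diag_one_eq)
      fix i assume "i < k"
      then have "\<sigma> i \<noteq> 0" using sigpos by force
      then show "1 / \<sigma> i * \<sigma> i = 1" by simp
    qed
    then show ?thesis unfolding Sig1_def mat_diag_diag using Kd by simp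
  qed
  also have "\<dots> = 0\<^sub>m k d" using Kd by (simp add: assoc' SK)
  finally show ?thesis using ending[OF X CZ] unfolding K_def by simp
qed

end


lemma kyfan:
  fixes s h :: "nat \<Rightarrow> real" and k r :: nat
  assumes kr: "k < r"
    and mono: "\<And>i j. i \<le> j \<Longrightarrow> j < r \<Longrightarrow> s j \<le> s i"
    and hb: "\<And>i. i < r \<Longrightarrow> 0 \<le> h i \<and> h i \<le> 1"
    and hs: "(\<Sum>i\<in>{0..<r}. h i) = real (r - k)"
  shows "(\<Sum>i\<in>{k..<r}. s i) \<le> (\<Sum>i\<in>{0..<r}. s i * h i)"
    and "(0 < k \<Longrightarrow> s k < s (k - 1)) \<Longrightarrow> (\<Sum>i\<in>{0..<r}. s i * h i) \<le> (\<Sum>i\<in>{k..<r}. s i) \<Longrightarrow> i < k \<Longrightarrow> h i = 0"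
proof -
  define a where "a = (\<Sum>i\<in>{0..<k}. h i)"
  have split: "(\<Sum>i\<in>{0..<r}. f i) = (\<Sum>i\<in>{0..<k}. f i) + (\<Sum>i\<in>{k..<r}. f i)" for f :: "nat \<Rightarrow> real"
    using kr by (subst sum.atLeastLessThan_concat) auto
  have cardkr: "(\<Sum>i\<in>{k..<r}. (1::real)) = real (r - k)" by simp
  have a2: "(\<Sum>i\<in>{k..<r}. 1 - h i) = a"
    using hs split[of h] cardkr unfolding a_def sum_subtractf by linarith
  have a0: "0 \<le> a" unfolding a_def using hb kr by (intro sum_nonneg) auto
  have D: "(\<Sum>i\<in>{0..<r}. s i * h i) - (\<Sum>i\<in>{k..<r}. s i)
     = (\<Sum>i\<in>{0..<k}. s i * h i) - (\<Sum>i\<in>{k..<r}. s i * (1 - h i))"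
    using split[of "\<lambda>i. s i * h i"] by (simp add: sum_subtractf right_diff_distrib)
  have up: "(\<Sum>i\<in>{k..<r}. s i * (1 - h i)) \<le> s k * a"
  proof -
    have "(\<Sum>i\<in>{k..<r}. s i * (1 - h i)) \<le> (\<Sum>i\<in>{k..<r}. s k * (1 - h i))"
      using hb mono by (intro sum_mono mult_right_mono) auto
    also have "\<dots> = s k * a" unfolding a2[symmetric] by (rule sum_distrib_left[symmetric])
    finally show ?thesis .
  qed
  have low: "c * a \<le> (\<Sum>i\<in>{0..<k}. s i * h i)" if c: "\<And>i. i < k \<Longrightarrow> c \<le> s i" for c
  proof -
    have "c * a = (\<Sum>i\<in>{0..<k}. c * h i)" unfolding a_def by (simp add: sum_distrib_left)
    also have "\<dots> \<le> (\<Sum>i\<in>{0..<k}. s i * h i)"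
      using hb c kr by (intro sum_mono mult_right_mono) auto
    finally show ?thesis .
  qed
  have l1: "s k * a \<le> (\<Sum>i\<in>{0..<k}. s i * h i)" using low[of "s k"] mono kr by auto
  show "(\<Sum>i\<in>{k..<r}. s i) \<le> (\<Sum>i\<in>{0..<r}. s i * h i)" using D up l1 by linarith
  assume gap: "0 < k \<Longrightarrow> s k < s (k - 1)"
    and le: "(\<Sum>i\<in>{0..<r}. s i * h i) \<le> (\<Sum>i\<in>{k..<r}. s i)" and i: "i < k"
  have kpos: "0 < k" using i by auto
  have l2: "s (k - 1) * a \<le> (\<Sum>i\<in>{0..<k}. s i * h i)" using low[of "s (k - 1)"] mono kr by auto
  have "(s (k - 1) - s k) * a \<le> 0" using D up l2 le by (simp add: left_diff_distrib)
  then have "a \<le> 0" using gap[OF kpos] by (simp add: mult_le_0_iff)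
  then have "a = 0" using a0 by auto
  then have "\<forall>i\<in>{0..<k}. h i = 0" unfolding a_def using hb kr
    by (subst (asm) sum_nonneg_eq_0_iff) auto
  then show "h i = 0" using i by auto
qed

lemma self_scalar_zero: "(x :: real vec) \<bullet> x = 0 \<Longrightarrow> x = 0\<^sub>v (dim_vec x)"
proof -
  assume h: "x \<bullet> x = 0"
  have "(\<Sum>i\<in>{0..<dim_vec x}. x $ i * x $ i) = 0" using h unfolding scalar_prod_def by simp
  then have "\<forall>i\<in>{0..<dim_vec x}. x $ i * x $ i = 0" by (subst (asm) sum_nonneg_eq_0_iff) auto
  then show ?thesis by (intro eq_vecI) auto
qed

lemma tr_add': assumes a: "dim_row (A :: real mat) = dim_row B" "dim_col A = dim_col B" "dim_row A = dim_col A"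
  shows "tr (A + B) = tr A + tr B"
proof -
  have "tr (A + B) = (\<Sum>i<dim_row A. A $$ (i,i) + B $$ (i,i))"
    unfolding tr_def using a by (intro sum.cong) auto
  also have "\<dots> = tr A + tr B" unfolding tr_def sum.distrib using a by simp
  finally show ?thesis .
qed

lemma tr_uminus': assumes a: "dim_row (A :: real mat) = dim_col A" shows "tr (- A) = - tr A"
proof -
  have "tr (- A) = (\<Sum>i<dim_row A. - (A $$ (i,i)))"
    unfolding tr_def using a by (intro sum.cong) auto
  also have "\<dots> = - tr A" unfolding tr_def sum_negf ..
  finally show ?thesis .
qed

lemma transpose_add': "dim_row (A :: real mat) = dim_row B \<Longrightarrow> dim_col A = dim_col B \<Longrightarrow>
  transpose_mat (A + B) = transpose_mat A + transpose_mat B"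
  by (rule eq_matI) auto

lemma proj_split:
  assumes P: "(P :: real mat) \<in> carrier_mat r r" and PP: "P * P = P" and PT: "transpose_mat P = P"
    and N: "N \<in> carrier_mat q r"
  shows "tr (N * (P * transpose_mat N)) \<le> tr (N * transpose_mat N)"
proof -
  define K where "K = N + - (N * P)"
  have K: "K \<in> carrier_mat q r" unfolding K_def using N P by auto
  have PPX: "P * (P * X) = P * X" if "dim_row X = r" for X
    using that P PP by (metis assoc' carrier_matD)
  have Nd: "dim_row N = q" "dim_col N = r" using N by auto
  have Pd: "dim_row P = r" "dim_col P = r" using P by auto
  have "tr (K * transpose_mat K) = tr (N * transpose_mat N) - tr (N * (P * transpose_mat N))"
    unfolding K_def using Nd Pd
    by (simp add: transpose_add' transpose_uminus transpose_mult' PT add_mult_distrib' mult_add_distrib' assoc' PPX tr_add' tr_uminus')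
  moreover have "0 \<le> tr (K * transpose_mat K)" by (rule tr_KKt_nonneg[OF K])
  ultimately show ?thesis by linarith
qed

lemma neg_eq: assumes A: "(a :: real mat) \<in> carrier_mat x y" and B: "b \<in> carrier_mat x y" and h: "a + b = 0\<^sub>m x y"
  shows "b = - a"
proof (rule eq_matI)
  fix i j assume ij: "i < dim_row (- a)" "j < dim_col (- a)"
  have "(a + b) $$ (i,j) = 0" using ij A by (simp add: h)
  then show "b $$ (i,j) = (- a) $$ (i,j)" using ij A B by simp
qed (use A B in auto)


lemma mat_vec_zero: "dim_col (M :: real mat) = c \<Longrightarrow> M *\<^sub>v 0\<^sub>v c = 0\<^sub>v (dim_row M)"
  by (intro eq_vecI) auto

lemma tr_one: "tr (1\<^sub>m d) = real d"
  unfolding tr_def by simp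

context tl begin

lemma LB:
  assumes feas: "tlse_feasible A B C D E F X"
  shows "tail \<le> (fro_norm (hcat E F))\<^sup>2 \<and> ((fro_norm (hcat E F))\<^sup>2 \<le> tail \<longrightarrow> X = Xn)"
proof -
  have E: "E \<in> carrier_mat q n" and F: "F \<in> carrier_mat q d" and X: "X \<in> carrier_mat n d"
    and eq1: "(A + E) * X = B + F" and eq2: "C * X = D"
    using feas unfolding tlse_feasible_def by auto
  have Xd: "dim_row X = n" "dim_col X = d" using X by auto
  have Ed: "dim_row E = q" "dim_col E = n" "dim_row F = q" "dim_col F = d" using E F by auto
  define Z where "Z = Zx X"
  have Zc: "Z \<in> carrier_mat m d" unfolding Z_def by (rule Zx_carr2[OF X])
  have Zd: "dim_row Z = m" "dim_col Z = d" using Zc by auto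
  have CZ: "Ct * Z = 0\<^sub>m p d"
    unfolding Ct_def Z_def Zx_def hcat_mult_Z[OF carr(3,4) X] eq2 by simp
  define Del where "Del = hcat E F"
  have Delc: "Del \<in> carrier_mat q m" unfolding Del_def m_def using E F by auto
  have Deld[simp]: "dim_row Del = q" "dim_col Del = m" using Delc by auto
  have "At + Del = hcat (A + E) (B + F)"
    unfolding At_def Del_def by (rule hcat_add) (auto simp: E F)
  then have "(At + Del) * Z = (A + E) * X - (B + F)"
    unfolding Z_def Zx_def by (simp add: hcat_mult_Z[of _ q n _ d X] E F X)
  also have "\<dots> = 0\<^sub>m q d" unfolding eq1 using B F by (intro minus_r_inv_mat) auto
  finally have AZ: "(At + Del) * Z = 0\<^sub>m q d" .
  define W where "W = transpose_mat Q2 * Z"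
  have QW: "Q2 * W = Z" unfolding W_def by (rule null_Q2[OF Zc CZ])
  define Y where "Y = transpose_mat V * W"
  have Yd[simp]: "dim_row Y = r" "dim_col Y = d" unfolding Y_def W_def using Zd by auto
  have Yc: "Y \<in> carrier_mat r d" by (auto intro: carrier_matI)
  have VY: "V * Y = W" unfolding Y_def W_def using Zd by simp
  have ZY: "Q2 * (V * Y) = Z" using QW VY by simp
  define L where "L = hcat (0\<^sub>m d n) (- 1\<^sub>m d :: real mat)"
  have "L * Z = 0\<^sub>m d n * X + (- 1\<^sub>m d) * (- 1\<^sub>m d)"
    unfolding L_def Z_def Zx_def by (rule hcat_mult_app) (auto simp: X)
  also have "\<dots> = 1\<^sub>m d" using Xd by simp
  finally have LZ: "L * Z = 1\<^sub>m d" .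
  have Ld[simp]: "dim_row L = d" "dim_col L = m" unfolding L_def m_def by auto
  define Ly where "Ly = L * (Q2 * V)"
  have LyY: "Ly * Y = 1\<^sub>m d"
  proof -
    have "Ly * Y = L * (Q2 * (V * Y))" unfolding Ly_def by (simp add: assoc')
    then show ?thesis using ZY LZ by simp
  qed
  have Lyd: "dim_row Ly = d" "dim_col Ly = r" unfolding Ly_def by auto
  define G where "G = transpose_mat Y * Y"
  have Gc: "G \<in> carrier_mat d d" unfolding G_def by (auto intro: carrier_matI)
  have detG: "det G \<noteq> 0"
  proof
    assume "det G = 0"
    then obtain v where v: "v \<in> carrier_vec d" "v \<noteq> 0\<^sub>v d" "G *\<^sub>v v = 0\<^sub>v d"
      using det_0_iff_vec_prod_zero_field[OF Gc] by blast
    have Yv: "Y *\<^sub>v v \<in> carrier_vec r" using v Yc by auto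
    have "(transpose_mat Y *\<^sub>v (Y *\<^sub>v v)) \<bullet> v = (Y *\<^sub>v v) \<bullet> (Y *\<^sub>v v)"
      by (rule transpose_vec_mult_scalar[OF Yc v(1) Yv])
    moreover have "transpose_mat Y *\<^sub>v (Y *\<^sub>v v) = G *\<^sub>v v"
      unfolding G_def using v Yc by (simp add: assoc_mult_mat_vec[of _ d r _ d])
    ultimately have "(Y *\<^sub>v v) \<bullet> (Y *\<^sub>v v) = 0" using v by simp
    then have Y0: "Y *\<^sub>v v = 0\<^sub>v r" using self_scalar_zero Yv by fastforce
    have "v = (Ly * Y) *\<^sub>v v" using LyY v by simp
    also have "\<dots> = Ly *\<^sub>v (Y *\<^sub>v v)" using v Yc Lyd by (intro assoc_mult_mat_vec[of _ d r _ d]) (auto intro: carrier_matI)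
    also have "\<dots> = 0\<^sub>v d" unfolding Y0 using Lyd by (simp add: mat_vec_zero)
    finally show False using v by simp
  qed
  obtain Gi where Gi: "Gi \<in> carrier_mat d d" "Gi * G = 1\<^sub>m d" "G * Gi = 1\<^sub>m d"
    using det_non_zero_imp_unit[OF Gc detG, of "()"] unfolding Units_def ring_mat_simps by auto
  have Gid[simp]: "dim_row Gi = d" "dim_col Gi = d" using Gi by auto
  have GT: "transpose_mat G = G" unfolding G_def by (simp add: transpose_mult')
  have GiT: "transpose_mat Gi = Gi"
  proof -
    have "transpose_mat (G * Gi) = transpose_mat Gi * transpose_mat G"
      by (rule transpose_mult') (simp add: G_def)
    then have "transpose_mat Gi * G = transpose_mat (G * Gi)" unfolding GT by simp
    then have l: "transpose_mat Gi * G = 1\<^sub>m d" using Gi by simp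
    have "transpose_mat Gi = transpose_mat Gi * (G * Gi)" using Gi by simp
    also have "\<dots> = (transpose_mat Gi * G) * Gi" by (simp add: assoc' G_def)
    finally show ?thesis using l by simp
  qed
  define P where "P = Y * (Gi * transpose_mat Y)"
  have Pd[simp]: "dim_row P = r" "dim_col P = r" unfolding P_def by auto
  have Pc: "P \<in> carrier_mat r r" by (auto intro: carrier_matI)
  have PY: "P * Y = Y"
  proof -
    have "P * Y = Y * (Gi * G)" unfolding P_def G_def by (simp add: assoc')
    then show ?thesis using Gi by simp
  qed
  have PP: "P * P = P"
  proof -
    have e: "P * P = (P * Y) * (Gi * transpose_mat Y)" unfolding P_def by (simp add: assoc')
    have "P * P = Y * (Gi * transpose_mat Y)" using e unfolding PY .
    then show ?thesis unfolding P_def[symmetric] .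
  qed
  have PT: "transpose_mat P = P"
    unfolding P_def by (simp add: transpose_mult' GiT assoc')
  have trP: "tr P = real d"
  proof -
    have t1: "tr P = tr ((Gi * transpose_mat Y) * Y)" unfolding P_def by (rule tr_comm[of _ r d]) (auto intro: carrier_matI)
    have t2: "(Gi * transpose_mat Y) * Y = 1\<^sub>m d" using Gi unfolding G_def by (simp add: assoc')
    show ?thesis unfolding t1 t2 by (rule tr_one)
  qed
  define N1 where "N1 = Del * (Q2 * V)"
  have N1d[simp]: "dim_row N1 = q" "dim_col N1 = r" unfolding N1_def by auto
  have N1c: "N1 \<in> carrier_mat q r" by (auto intro: carrier_matI)
  have N1Y: "N1 * Y = - (U * (Sig * Y))"
  proof -
    have "(At + Del) * Z = At * Z + Del * Z" by (rule add_mult_distrib') (auto simp: Zd)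
    then have s0: "At * Z + Del * Z = 0\<^sub>m q d" using AZ by simp
    have "At * Z = (At * Q2) * (V * Y)" unfolding ZY[symmetric] by (simp add: assoc')
    also have "\<dots> = U * (Sig * Y)" unfolding svd' by (simp add: assoc')
    finally have a1: "At * Z = U * (Sig * Y)" .
    have a2: "Del * Z = N1 * Y" unfolding ZY[symmetric] N1_def by (simp add: assoc')
    from s0 a1 a2 have "U * (Sig * Y) + N1 * Y = 0\<^sub>m q d" by simp
    moreover have "U * (Sig * Y) \<in> carrier_mat q d" "N1 * Y \<in> carrier_mat q d" by (auto intro!: carrier_matI)
    ultimately show ?thesis by (intro neg_eq[of "U * (Sig * Y)" q d "N1 * Y"])
  qed
  have step1: "tr (Del * (Q2 * (transpose_mat Q2 * transpose_mat Del))) \<le> tr (Del * transpose_mat Del)"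
  proof -
    have "Del * transpose_mat Del = Del * (1\<^sub>m m * transpose_mat Del)" by simp
    also have "\<dots> = Del * ((Q1 * transpose_mat Q1 + Q2 * transpose_mat Q2) * transpose_mat Del)"
      by (simp add: Qblocks)
    also have "\<dots> = (Del * Q1) * transpose_mat (Del * Q1) + Del * (Q2 * (transpose_mat Q2 * transpose_mat Del))"
      by (simp add: add_mult_distrib' mult_add_distrib' assoc' transpose_mult')
    finally have "tr (Del * transpose_mat Del) = tr ((Del * Q1) * transpose_mat (Del * Q1)) + tr (Del * (Q2 * (transpose_mat Q2 * transpose_mat Del)))"
      by (simp add: tr_add')
    moreover have "0 \<le> tr ((Del * Q1) * transpose_mat (Del * Q1))"
      by (rule tr_KKt_nonneg[of _ q p]) (auto intro: carrier_matI)
    ultimately show ?thesis by linarith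
  qed
  have step2: "N1 * transpose_mat N1 = Del * (Q2 * (transpose_mat Q2 * transpose_mat Del))"
    unfolding N1_def by (simp add: transpose_mult' assoc')
  have step3: "tr (N1 * (P * transpose_mat N1)) \<le> tr (N1 * transpose_mat N1)"
    by (rule proj_split[OF Pc PP PT N1c])
  have N1P: "N1 * P = - (U * (Sig * P))"
  proof -
    have "N1 * P = (N1 * Y) * (Gi * transpose_mat Y)" unfolding P_def by (simp add: assoc')
    also have "\<dots> = - (U * (Sig * P))" unfolding N1Y P_def by (simp add: assoc')
    finally show ?thesis .
  qed
  have step4: "tr (N1 * (P * transpose_mat N1)) = tr (Sig * (P * Sig))"
  proof -
    have t1: "N1 * (P * transpose_mat N1) = (N1 * P) * transpose_mat (N1 * P)"
      by (simp add: transpose_mult' assoc' PT) (simp add: assoc'[symmetric] PP)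
    have t2: "(N1 * P) * transpose_mat (N1 * P) = U * (Sig * (P * (Sig * transpose_mat U)))"
      unfolding N1P transpose_uminus by (simp add: transpose_mult' assoc' PT Sig_def) (simp add: assoc'[symmetric] PP)
    have t3: "tr (U * (Sig * (P * (Sig * transpose_mat U)))) = tr ((Sig * (P * (Sig * transpose_mat U))) * U)"
      by (rule tr_comm[of _ q r]) (auto intro: carrier_matI)
    have t4: "(Sig * (P * (Sig * transpose_mat U))) * U = Sig * (P * Sig)"
      by (simp add: assoc' Ublocks)
    show ?thesis unfolding t1 t2 t3 t4 ..
  qed
  define h where "h i = P $$ (i,i)" for i
  have step5: "tr (Sig * (P * Sig)) = (\<Sum>i\<in>{0..<r}. (\<sigma> i)\<^sup>2 * h i)"
  proof -
    have "Sig * (P * Sig) = mat r r (\<lambda>(i,j). \<sigma> i * (P $$ (i,j) * \<sigma> j))"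
      unfolding Sig_def mat_diag_mult_right[OF Pc] by (subst mat_diag_mult_left[of _ r r]) auto
    then show ?thesis unfolding tr_def h_def lessThan_atLeast0
      by (simp add: power2_eq_square mult_ac)
  qed
  have hsq: "h i = (\<Sum>j\<in>{0..<r}. (P $$ (i,j))\<^sup>2)" if i: "i < r" for i
  proof -
    have "h i = (P * P) $$ (i,i)" unfolding h_def PP ..
    also have "\<dots> = (\<Sum>j\<in>{0..<r}. P $$ (i,j) * P $$ (j,i))"
      using i by (simp add: scalar_prod_def)
    also have "\<dots> = (\<Sum>j\<in>{0..<r}. (P $$ (i,j))\<^sup>2)"
    proof (rule sum.cong)
      fix j assume j: "j \<in> {0..<r}"
      have "P $$ (j,i) = transpose_mat P $$ (i,j)" using i j by simp
      then show "P $$ (i,j) * P $$ (j,i) = (P $$ (i,j))\<^sup>2" unfolding PT by (simp add: power2_eq_square)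
    qed simp
    finally show ?thesis .
  qed
  have hb: "0 \<le> h i \<and> h i \<le> 1" if i: "i < r" for i
  proof -
    have "(P $$ (i,i))\<^sup>2 \<le> (\<Sum>j\<in>{0..<r}. (P $$ (i,j))\<^sup>2)"
      using i by (intro member_le_sum[of i "{0..<r}" "\<lambda>j. (P $$ (i,j))\<^sup>2"]) auto
    then have h2: "h i * h i \<le> h i" and h0: "0 \<le> h i" using hsq[OF i] unfolding h_def
      by (auto intro: sum_nonneg simp: power2_eq_square)
    have "h i \<le> 1"
    proof (rule ccontr)
      assume "\<not> h i \<le> 1"
      then have "1 < h i" by simp
      then have "h i * 1 < h i * h i" by (intro mult_strict_left_mono) auto
      then show False using h2 by simp
    qed
    then show ?thesis using h0 by simp
  qed
  have hs: "(\<Sum>i\<in>{0..<r}. h i) = real (r - k)"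
    using trP dims unfolding tr_def h_def lessThan_atLeast0 by simp
  have smono: "\<And>i j. i \<le> j \<Longrightarrow> j < r \<Longrightarrow> (\<sigma> j)\<^sup>2 \<le> (\<sigma> i)\<^sup>2"
    using \<sigma>_mono \<sigma>_nonneg unfolding r_def by (auto intro!: power_mono)
  have sgap: "0 < k \<Longrightarrow> (\<sigma> k)\<^sup>2 < (\<sigma> (k - 1))\<^sup>2"
  proof -
    assume "0 < k"
    then have "\<sigma> k < \<sigma> (k - 1)" using gap unfolding k_def by auto
    moreover have "0 \<le> \<sigma> k" using \<sigma>_nonneg dims unfolding r_def by auto
    ultimately show ?thesis by (intro power_strict_mono) auto
  qed
  have ky1: "(\<Sum>i\<in>{k..<r}. (\<sigma> i)\<^sup>2) \<le> (\<Sum>i\<in>{0..<r}. (\<sigma> i)\<^sup>2 * h i)"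
    by (rule kyfan(1)[of k r "\<lambda>i. (\<sigma> i)\<^sup>2" h]) (use dims(4) smono hb hs in auto)
  have tailS: "tail = (\<Sum>i\<in>{k..<r}. (\<sigma> i)\<^sup>2)" unfolding tail_def ..
  have frosq: "(fro_norm (hcat E F))\<^sup>2 = tr (Del * transpose_mat Del)"
    unfolding Del_def[symmetric] by (rule fro_sq[OF Delc])
  have chain: "(\<Sum>i\<in>{0..<r}. (\<sigma> i)\<^sup>2 * h i) \<le> (fro_norm (hcat E F))\<^sup>2"
  proof -
    have s2: "tr (N1 * transpose_mat N1) = tr (Del * (Q2 * (transpose_mat Q2 * transpose_mat Del)))"
      unfolding step2 ..
    show ?thesis using step1 s2 step3 step4 step5 frosq by linarith
  qed
  show ?thesis
  proof
    show "tail \<le> (fro_norm (hcat E F))\<^sup>2" using ky1 chain tailS by linarith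
    show "(fro_norm (hcat E F))\<^sup>2 \<le> tail \<longrightarrow> X = Xn"
    proof
      assume le: "(fro_norm (hcat E F))\<^sup>2 \<le> tail"
      have le2: "(\<Sum>i\<in>{0..<r}. (\<sigma> i)\<^sup>2 * h i) \<le> (\<Sum>i\<in>{k..<r}. (\<sigma> i)\<^sup>2)"
        using chain le tailS by linarith
      have h0: "h i = 0" if "i < k" for i
        by (rule kyfan(2)[of k r "\<lambda>i. (\<sigma> i)\<^sup>2" h]) (use dims(4) smono hb hs sgap le2 that in auto)
      have P0: "P $$ (i,j) = 0" if i: "i < k" and j: "j < r" for i j
      proof -
        have ir: "i < r" using i dims by auto
        have "(\<Sum>j\<in>{0..<r}. (P $$ (i,j))\<^sup>2) = 0" using h0[OF i] hsq[OF ir] by simp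
        then have "\<forall>j\<in>{0..<r}. (P $$ (i,j))\<^sup>2 = 0" by (subst (asm) sum_nonneg_eq_0_iff) auto
        then show ?thesis using j by auto
      qed
      have Y0: "Y $$ (i,l) = 0" if i: "i < k" and l: "l < d" for i l
      proof -
        have ir: "i < r" using i dims by auto
        have "Y $$ (i,l) = (P * Y) $$ (i,l)" unfolding PY ..
        also have "\<dots> = (\<Sum>j\<in>{0..<r}. P $$ (i,j) * Y $$ (j,l))" using ir l by (simp add: scalar_prod_def)
        also have "\<dots> = 0" using P0[OF i] by simp
        finally show ?thesis .
      qed
      have "Y = (transpose_mat V1 @\<^sub>r transpose_mat V2) * W"
        unfolding Y_def V_def by (simp add: transpose_hcat[OF carr(9,10)])
      also have "\<dots> = (transpose_mat V1 * W) @\<^sub>r (transpose_mat V2 * W)"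
        by (rule app_mult[of _ k r _ d _ d]) (auto simp: W_def Zd)
      finally have Yapp: "Y = (transpose_mat V1 * W) @\<^sub>r (transpose_mat V2 * W)" .
      have VW: "transpose_mat V1 * W = 0\<^sub>m k d"
      proof (rule eq_matI)
        fix i l assume il: "i < dim_row (0\<^sub>m k d :: real mat)" "l < dim_col (0\<^sub>m k d :: real mat)"
        then have il': "i < k" "l < d" by auto
        have "Y $$ (i,l) = (transpose_mat V1 * W) $$ (i,l)"
          unfolding Yapp using il' dims by (subst app_index[of _ k d _ d]) (auto simp: W_def Zd intro: carrier_matI)
        then show "(transpose_mat V1 * W) $$ (i,l) = (0\<^sub>m k d :: real mat) $$ (i,l)" using Y0[OF il'] il' by simp
      qed (auto simp: W_def Zd)
      show "X = Xn" using ending[OF X] CZ VW unfolding Z_def W_def by simp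
    qed
  qed
qed

end

theorem theorem2p1:
  fixes p q n d :: nat
    and A B C D :: "real mat"
    and Q1 Q2 U1 U2 V1 V2 V11 V21 V12 V22 :: "real mat"
    and \<sigma> :: "nat \<Rightarrow> real"
  assumes pos: "0 < p" "0 < q" "0 < n" "0 < d"
    and pn: "p \<le> n" and qge: "n + d - p \<le> q"
    and A: "A \<in> carrier_mat q n" and B: "B \<in> carrier_mat q d"
    and C: "C \<in> carrier_mat p n" and D: "D \<in> carrier_mat p d"
    and Crank: "full_row_rank C"
    and Q1: "Q1 \<in> carrier_mat (n + d) p" and Q2: "Q2 \<in> carrier_mat (n + d) (n + d - p)"
    and Qorth: "orthogonal_of_order (n + d) (hcat Q1 Q2)"
    and Qrange: "colspace Q1 = colspace (transpose_mat (hcat C D))"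
    and U1: "U1 \<in> carrier_mat q (n - p)" and U2: "U2 \<in> carrier_mat q (d)"
    and Uorth: "orthonormal_cols (hcat U1 U2)"
    and V1: "V1 \<in> carrier_mat (n + d - p) (n - p)" and V2: "V2 \<in> carrier_mat (n + d - p) d"
    and Vorth: "orthogonal_of_order (n + d - p) (hcat V1 V2)"
    and \<sigma>_mono: "\<And>i j. i \<le> j \<Longrightarrow> j < n + d - p \<Longrightarrow> \<sigma> j \<le> \<sigma> i"
    and \<sigma>_nonneg: "\<And>i. i < n + d - p \<Longrightarrow> 0 \<le> \<sigma> i"
    and svd: "hcat A B * Q2 = hcat U1 U2 * mat_diag (n + d - p) \<sigma> * transpose_mat (hcat V1 V2)"
    and V11: "V11 \<in> carrier_mat n (n - p)" and V21: "V21 \<in> carrier_mat d (n - p)"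
    and V12: "V12 \<in> carrier_mat n d" and V22: "V22 \<in> carrier_mat d d"
    and Vbar1: "Q2 * V1 = V11 @\<^sub>r V21"
    and Vbar2: "Q2 * V2 = V12 @\<^sub>r V22"
    and gap: "n - p > 0 \<Longrightarrow> \<sigma> (n - p - 1) > \<sigma> (n - p)"
    and V22_inv: "invertible_mat V22"
  shows "let Xn = - (V12 * the (mat_inverse V22));
             Ahat = U1 * mat_diag (n - p) \<sigma> * transpose_mat V11;
             Bhat = U1 * mat_diag (n - p) \<sigma> * transpose_mat V21
         in (\<forall>X. tlse_solution A B C D X \<longleftrightarrow> X = Xn)
            \<and> Ahat * Xn = Bhat \<and> C * Xn = D
            \<and> (\<forall>X \<in> carrier_mat n d. Ahat * X = Bhat \<and> C * X = D \<longrightarrow> X = Xn)"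
proof -
  interpret T: tl p q n d A B C D Q1 Q2 U1 U2 V1 V2 V11 V21 V12 V22 \<sigma>
    unfolding tl_def using assms by blast
  have XnE: "- (V12 * the (mat_inverse V22)) = T.Xn" unfolding T.Xn_def T.V22i_def ..
  have AE: "U1 * mat_diag (n - p) \<sigma> * transpose_mat V11 = T.Ahat" unfolding T.Ahat_def T.Sig1_def T.k_def ..
  have BE: "U1 * mat_diag (n - p) \<sigma> * transpose_mat V21 = T.Bhat" unfolding T.Bhat_def T.Sig1_def T.k_def ..
  have fro_nn: "0 \<le> fro_norm M" for M unfolding fro_norm_def by (simp add: sum_nonneg)
  have feas0: "tlse_feasible A B C D T.E0 T.F0 T.Xn"
    unfolding tlse_feasible_def using T.EF0 T.feas0 T.CXn by simp
  have min0: "tlse_minimizer A B C D T.E0 T.F0"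
    unfolding tlse_minimizer_def
  proof (intro conjI allI impI)
    show "\<exists>X. tlse_feasible A B C D T.E0 T.F0 X" using feas0 by blast
    fix E' F' X' assume f: "tlse_feasible A B C D E' F' X'"
    have "(fro_norm (hcat T.E0 T.F0))\<^sup>2 \<le> (fro_norm (hcat E' F'))\<^sup>2"
      using T.LB[OF f] T.norm0 by simp
    then show "fro_norm (hcat T.E0 T.F0) \<le> fro_norm (hcat E' F')"
      using fro_nn by (meson power2_le_imp_le)
  qed
  have sol: "tlse_solution A B C D X \<longleftrightarrow> X = T.Xn" for X
  proof
    assume "X = T.Xn"
    then show "tlse_solution A B C D X" unfolding tlse_solution_def using min0 feas0 by blast
  next
    assume "tlse_solution A B C D X"
    then obtain E F where m: "tlse_minimizer A B C D E F" and f: "tlse_feasible A B C D E F X"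
      unfolding tlse_solution_def by blast
    have "fro_norm (hcat E F) \<le> fro_norm (hcat T.E0 T.F0)"
      using m feas0 unfolding tlse_minimizer_def by blast
    then have "(fro_norm (hcat E F))\<^sup>2 \<le> (fro_norm (hcat T.E0 T.F0))\<^sup>2"
      using fro_nn by (simp add: power_mono)
    then have "(fro_norm (hcat E F))\<^sup>2 \<le> T.tail" using T.norm0 by simp
    then show "X = T.Xn" using T.LB[OF f] by blast
  qed
  show ?thesis unfolding Let_def XnE AE BE
    using sol T.AhatXn T.CXn T.AhatUnique by blast
qed

end
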